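(* Suppose (V4'), (A1) and (A4) hold. Then the ODE $\frac{d}{dt}\vartheta_t=\bar f(\vartheta_t)$ is exponentially asymptotically stable: there are positive constants $b$ and $\delta$ such that for every initial condition $\vartheta_0\in\mathbb{R}^d$, $$\|\vartheta_t-\theta^*\|\le b\|\vartheta_0-\theta^*\|e^{-\delta t},\qquad t\ge0 .$$
   Context: Setting. Fix $d,m,K\ge1$, frequencies $\omega_i>0$, phases $\phi_i$; clock process $\Phi^i_t=\exp(2\pi j[\omega_it+\phi_i])$ with $\Omega$ the closure of its orbit and $\pi$ the uniform probability on $\Omega$; probing signal $\xi_t=G(\Phi_t)$, $G(z)=G_0((z+1/z)/2)$, $G_0\colon\mathbb{R}^K\to\mathbb{R}^m$ analytic with absolutely summable Taylor coefficients. $f\colon\mathbb{R}^d\times\mathbb{R}^m\to\mathbb{R}^d$, $\bar f(\theta)=\int f(\theta,G(z))\pi(dz)$, continuously differentiable with $\bar A=\partial_\theta\bar f$; QSA ODE $\frac{d}{dt}\Theta_t=\alpha f(\Theta_t,\xi_t)$. (A1): $\|\bar f(\theta')-\bar f(\theta)\|\le L_f\|\theta'-\theta\|$ and $\|f(\theta',\xi)-f(\theta,\xi)\|+\|f(\theta,\xi')-f(\theta,\xi)\|\le L_f[\|\theta'-\theta\|+\|\xi'-\xi\|]$. (V4'): there are $V\colon\mathbb{R}^d\to\mathbb{R}_+$ and constants $L_V$, $\delta_0,\delta_1,T>0$ with $V$ $L_V$-Lipschitz, $V(\theta)\ge\|\theta\|$ when $\|\theta\|\ge\delta_0^{-1}$,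 and $V(\vartheta_{\tau+T})-V(\vartheta_\tau)\le-\delta_1\|\vartheta_\tau\|$ for every solution of $\frac{d}{dt}\vartheta=\bar f(\vartheta)$ and every $\tau\ge0$ with $\|\vartheta_\tau\|>\delta_1^{-1}$. (A4): there are $\alpha^0>0$, $B_u<\infty$ such that for every $\alpha\in(0,\alpha^0]$ and every initial $(\Theta_0,\Phi_0)$ the QSA solution satisfies $\|\Theta_t\|\le B_u$ for all large $t$; the ODE $\frac{d}{dt}\vartheta=\bar f(\vartheta)$ is globally asymptotically stable with unique equilibrium $\theta^*$; and $\bar A(\theta^* )$ is Hurwitz. *)

theory Defs
  imports "HOL-Analysis.Analysis" "HOL-Probability.Probability"
begin

definition clock :: "real^'k \<Rightarrow> real^'k \<Rightarrow> real \<Rightarrow> complex^'k" where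
  "clock w ph t = (\<chi> i. exp (2 * of_real pi * \<i> * of_real (w$i * t + ph$i)))"

definition clock_orbit :: "real^'k \<Rightarrow> real^'k \<Rightarrow> (complex^'k) set" where
  "clock_orbit w ph = closure (clock w ph ` {0..})"

definition clock_flow :: "real^'k \<Rightarrow> complex^'k \<Rightarrow> real \<Rightarrow> complex^'k" where
  "clock_flow w z t = (\<chi> i. z$i * exp (2 * of_real pi * \<i> * of_real (w$i * t)))"

text \<open>Uniform probability on Omega: a Borel probability measure concentrated on Omega
  and invariant under the clock flow (this is the Haar measure of the orbit closure).\<close>
definition uniform_on_orbit :: "real^'k \<Rightarrow> real^'k \<Rightarrow> (complex^'k) measure \<Rightarrow> bool" where
  "uniform_on_orbit w ph P \<longleftrightarrow>
     prob_space P \<and> sets P = sets borel \<and> emeasure P (clock_orbit w ph) = 1 \<and>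
     (\<forall>s. distr P borel (\<lambda>z. clock_flow w z s) = P)"

text \<open>G(z) = G0((z + 1/z)/2), the argument taken componentwise (real-valued on the torus).\<close>
definition probe :: "(real^'k \<Rightarrow> real^'m) \<Rightarrow> complex^'k \<Rightarrow> real^'m" where
  "probe G0 z = G0 (\<chi> i. Re ((z$i + inverse (z$i)) / 2))"

text \<open>G0 is given by its multivariate Taylor series (at 0) with absolutely summable
  coefficients; the expansion is required on the cube [-1,1]^K where G0 is evaluated.\<close>
definition abs_summable_taylor :: "(real^'k \<Rightarrow> real^'m) \<Rightarrow> bool" where
  "abs_summable_taylor G0 \<longleftrightarrow>
     (\<exists>c :: ('k \<Rightarrow> nat) \<Rightarrow> real^'m.
        (\<lambda>a. norm (c a)) summable_on UNIV \<and>
        (\<forall>x. (\<forall>i. \<bar>x$i\<bar> \<le> 1) \<longrightarrow>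
             ((\<lambda>a. (\<Prod>i\<in>UNIV. (x$i) ^ (a i)) *\<^sub>R c a) has_sum G0 x) UNIV))"

definition nonauto_solution :: "(real \<Rightarrow> 'a::real_normed_vector \<Rightarrow> 'a) \<Rightarrow> (real \<Rightarrow> 'a) \<Rightarrow> bool" where
  "nonauto_solution F x \<longleftrightarrow> (\<forall>t\<ge>0. (x has_vector_derivative F t (x t)) (at t within {0..}))"

definition ode_solution :: "('a::real_normed_vector \<Rightarrow> 'a) \<Rightarrow> (real \<Rightarrow> 'a) \<Rightarrow> bool" where
  "ode_solution F x \<longleftrightarrow> nonauto_solution (\<lambda>t. F) x"

definition globally_asymptotically_stable :: "('a::real_normed_vector \<Rightarrow> 'a) \<Rightarrow> 'a \<Rightarrow> bool" where
  "globally_asymptotically_stable F ts \<longleftrightarrow>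
     (\<forall>e>0. \<exists>d>0. \<forall>x. ode_solution F x \<and> norm (x 0 - ts) < d \<longrightarrow> (\<forall>t\<ge>0. norm (x t - ts) < e)) \<and>
     (\<forall>x. ode_solution F x \<longrightarrow> (x \<longlongrightarrow> ts) at_top)"

definition hurwitz :: "real^'n^'n \<Rightarrow> bool" where
  "hurwitz A \<longleftrightarrow>
     (\<forall>l::complex. det (mat l - (\<chi> i j. complex_of_real (A$i$j))) = 0 \<longrightarrow> Re l < 0)"

end

theory Submission
  imports Defs "Jordan_Normal_Form.Schur_Decomposition"
begin

no_notation Matrix.vec_index (infixl "$" 100)
no_notation Matrix.scalar_prod (infix "\<bullet>" 70)

lemma sol_cont: "ode_solution F x \<Longrightarrow> continuous_on {0..} x"
  unfolding ode_solution_def nonauto_solution_def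
  by (rule continuous_on_vector_derivative) auto

lemma sol_at: "ode_solution F x \<Longrightarrow> t > 0 \<Longrightarrow> (x has_vector_derivative F (x t)) (at t)"
proof -
  assume a: "ode_solution F x" "t > 0"
  then have "(x has_vector_derivative F (x t)) (at t within {0..})"
    unfolding ode_solution_def nonauto_solution_def by auto
  then have "(x has_vector_derivative F (x t)) (at t within {0<..})"
    by (rule has_vector_derivative_within_subset) auto
  then show ?thesis using a(2) by (subst (asm) has_vector_derivative_within_open) auto
qed

lemma sol_shift:
  assumes "ode_solution F x" "s \<ge> 0"
  shows "ode_solution F (\<lambda>t. x (t + s))"
  unfolding ode_solution_def nonauto_solution_def
proof (intro allI impI)
  fix t :: real assume t: "t \<ge> 0"
  have "(x has_vector_derivative F (x (t+s))) (at (t+s) within {0..})"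
    using assms t unfolding ode_solution_def nonauto_solution_def by auto
  then have d: "(x has_vector_derivative F (x (t+s))) (at (t+s) within (\<lambda>u. u + s) ` {0..})"
    by (rule has_vector_derivative_within_subset) (use assms in auto)
  have "((\<lambda>u. u + s) has_vector_derivative 1) (at t within {0..})"
    by (auto intro!: derivative_eq_intros)
  from vector_diff_chain_within[OF this d] show "((\<lambda>t. x (t + s)) has_vector_derivative F (x (t + s))) (at t within {0..})"
    by (simp add: o_def)
qed

lemma gronwall:
  fixes F :: "'a::real_inner \<Rightarrow> 'a"
  assumes lip: "\<forall>a b. norm (F a - F b) \<le> L * norm (a - b)" and L: "L \<ge> 0"
    and x: "ode_solution F x" and y: "ode_solution F y" and t: "t \<ge> 0"
  shows "norm (x t - y t) \<le> norm (x 0 - y 0) * exp (L * t)"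
proof -
  define z where "z u = x u - y u" for u
  define \<phi> where "\<phi> u = inner (z u) (z u) * exp (-(2*L) * u)" for u
  have "\<phi> t \<le> \<phi> 0"
  proof (rule DERIV_nonpos_imp_decreasing_open[OF t])
    show "continuous_on {0..t} \<phi>"
      unfolding \<phi>_def z_def
      using continuous_on_subset[OF sol_cont[OF x], of "{0..t}"] continuous_on_subset[OF sol_cont[OF y], of "{0..t}"]
      by (auto intro!: continuous_intros)
  next
    fix u :: real assume u: "0 < u" "u < t"
    have dz: "(z has_vector_derivative (F (x u) - F (y u))) (at u)"
      unfolding z_def using sol_at[OF x u(1)] sol_at[OF y u(1)] by (intro derivative_intros) auto
    have "(\<phi> has_real_derivative (2 * inner (z u) (F (x u) - F (y u)) * exp (-(2*L) * u)
           + inner (z u) (z u) * (exp (-(2*L) * u) * (-(2*L))))) (at u)"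
      unfolding \<phi>_def
      using dz unfolding has_vector_derivative_def has_field_derivative_def
      by (auto intro!: derivative_eq_intros simp: algebra_simps inner_commute)
    moreover have "2 * inner (z u) (F (x u) - F (y u)) * exp (-(2*L) * u)
           + inner (z u) (z u) * (exp (-(2*L) * u) * (-(2*L))) \<le> 0"
    proof -
      have "inner (z u) (F (x u) - F (y u)) \<le> norm (z u) * norm (F (x u) - F (y u))"
        by (rule norm_cauchy_schwarz)
      also have "\<dots> \<le> norm (z u) * (L * norm (z u))"
        using lip by (auto intro!: mult_left_mono simp: z_def)
      finally have "inner (z u) (F (x u) - F (y u)) \<le> L * inner (z u) (z u)"
        by (simp add: power2_norm_eq_inner[symmetric] power2_eq_square algebra_simps)
      then have "2 * exp (-(2*L) * u) * (inner (z u) (F (x u) - F (y u)) - L * inner (z u) (z u)) \<le> 0"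
        by (intro mult_nonneg_nonpos) auto
      then show ?thesis by (simp add: algebra_simps)
    qed
    ultimately show "\<exists>y. (\<phi> has_real_derivative y) (at u) \<and> y \<le> 0" by blast
  qed
  then have "(norm (z t))^2 * exp (-(2*L) * t) \<le> (norm (z 0))^2"
    by (simp add: \<phi>_def power2_norm_eq_inner)
  then have "(norm (z t))^2 \<le> (norm (z 0))^2 * exp (2*L*t)"
    by (simp add: exp_minus field_simps)
  also have "\<dots> = (norm (z 0) * exp (L*t))^2"
    by (simp add: power_mult_distrib exp_double[symmetric] mult.assoc power2_eq_square exp_add[symmetric])
  finally show ?thesis unfolding z_def
    by (rule power2_le_imp_le) simp
qed

lemma limit_solution:
  fixes F :: "'a::euclidean_space \<Rightarrow> 'a"
  assumes lip: "\<forall>a b. norm (F a - F b) \<le> L * norm (a - b)" and L: "L \<ge> 0"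
    and xs: "\<And>n. ode_solution F (xs n)" and conv: "(\<lambda>n. xs n 0) \<longlonglongrightarrow> y0"
  shows "\<exists>y. ode_solution F y \<and> (\<forall>t\<ge>0. (\<lambda>n. xs n t) \<longlonglongrightarrow> y t)"
proof -
  have gr: "norm (xs n t - xs m t) \<le> norm (xs n 0 - xs m 0) * exp (L * t)" if "t \<ge> 0" for n m t
    using gronwall[OF lip L xs xs that] .
  have C0: "Cauchy (\<lambda>n. xs n 0)" using conv by (rule LIMSEQ_imp_Cauchy)
  have "Cauchy (\<lambda>n. xs n t)" if t: "t \<ge> 0" for t
  proof (rule metric_CauchyI)
    fix e :: real assume e: "e > 0"
    have "e / exp (L*t) > 0" using e by simp
    from metric_CauchyD[OF C0 this] obtain M where M: "\<forall>m\<ge>M. \<forall>n\<ge>M. dist (xs m 0) (xs n 0) < e / exp (L*t)" by blast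
    show "\<exists>M. \<forall>m\<ge>M. \<forall>n\<ge>M. dist (xs m t) (xs n t) < e"
    proof (intro exI allI impI)
      fix m n assume mn: "M \<le> m" "M \<le> n"
      have "dist (xs m t) (xs n t) \<le> norm (xs m 0 - xs n 0) * exp (L * t)"
        using gr[OF t] by (simp add: dist_norm)
      also have "\<dots> < e / exp (L*t) * exp (L*t)"
        using M mn by (intro mult_strict_right_mono) (auto simp: dist_norm)
      finally show "dist (xs m t) (xs n t) < e" by simp
    qed
  qed
  then have "convergent (\<lambda>n. xs n t)" if "t \<ge> 0" for t
    using that by (simp add: Cauchy_convergent_iff)
  then obtain y where y: "\<And>t. t \<ge> 0 \<Longrightarrow> (\<lambda>n. xs n t) \<longlonglongrightarrow> y t"
    unfolding convergent_def by metis
  have y0: "y 0 = y0" using y[of 0] conv LIMSEQ_unique by auto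
  have bnd: "norm (xs n t - y t) \<le> norm (xs n 0 - y0) * exp (L * t)" if t: "t \<ge> 0" for n t
  proof -
    have l1: "(\<lambda>m. norm (xs n t - xs m t)) \<longlonglongrightarrow> norm (xs n t - y t)"
      by (intro tendsto_intros y t)
    have l2: "(\<lambda>m. norm (xs n 0 - xs m 0) * exp (L * t)) \<longlonglongrightarrow> norm (xs n 0 - y0) * exp (L * t)"
      by (intro tendsto_mult_right tendsto_norm tendsto_diff tendsto_const conv)
    show ?thesis by (rule LIMSEQ_le[OF l1 l2]) (use gr[OF t] in blast)
  qed
  have "(y has_vector_derivative F (y t)) (at t within {0..})" if t: "t \<ge> 0" for t
  proof -
    define N where "N = t + 1"
    have SS: "{0..N} \<subseteq> {0..}" by auto
    have derf: "((xs n) has_derivative (\<lambda>h. h *\<^sub>R F (xs n u))) (at u within {0..N})"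
      if "u \<in> {0..N}" for n u
    proof -
      have "(xs n has_vector_derivative F (xs n u)) (at u within {0..})"
        using xs[of n] that unfolding ode_solution_def nonauto_solution_def by auto
      then show ?thesis unfolding has_vector_derivative_def
        by (rule has_derivative_subset) auto
    qed
    have nle: "\<forall>\<^sub>F n in sequentially. \<forall>u\<in>{0..N}. \<forall>h. norm (h *\<^sub>R F (xs n u) - h *\<^sub>R F (y u)) \<le> e * norm h"
      if e: "e > 0" for e
    proof -
      define K where "K = (L + 1) * exp (L * N)"
      have K: "K > 0" using L by (simp add: K_def)
      have "\<forall>\<^sub>F n in sequentially. dist (xs n 0) y0 < e / K"
        using conv e K by (auto simp: tendsto_iff)
      then show ?thesis
      proof eventually_elim
        case (elim n)
        show ?case
        proof (intro ballI allI)
          fix u h assume u: "u \<in> {0..N}"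
          have "norm (h *\<^sub>R F (xs n u) - h *\<^sub>R F (y u)) = \<bar>h\<bar> * norm (F (xs n u) - F (y u))"
            by (simp add: scaleR_diff_right[symmetric])
          also have "\<dots> \<le> \<bar>h\<bar> * (L * norm (xs n u - y u))"
            using lip by (intro mult_left_mono) auto
          also have "\<dots> \<le> \<bar>h\<bar> * ((L + 1) * (norm (xs n 0 - y0) * exp (L * N)))"
          proof (intro mult_left_mono mult_mono)
            have "norm (xs n u - y u) \<le> norm (xs n 0 - y0) * exp (L * u)" using bnd u by auto
            also have "\<dots> \<le> norm (xs n 0 - y0) * exp (L * N)"
              using u L by (intro mult_left_mono) (auto intro: mult_left_mono)
            finally show "norm (xs n u - y u) \<le> norm (xs n 0 - y0) * exp (L * N)" .
          qed (use L in auto)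
          also have "\<dots> = \<bar>h\<bar> * (K * dist (xs n 0) y0)"
            by (simp add: K_def dist_norm)
          also have "\<dots> \<le> \<bar>h\<bar> * (K * (e / K))"
            using elim K by (intro mult_left_mono) auto
          also have "\<dots> = e * norm h" using K by simp
          finally show "norm (h *\<^sub>R F (xs n u) - h *\<^sub>R F (y u)) \<le> e * norm h" .
        qed
      qed
    qed
    from has_derivative_sequence[of "{0..N}" xs "\<lambda>n u h. h *\<^sub>R F (xs n u)" "\<lambda>u h. h *\<^sub>R F (y u)" 0 y0,
        OF convex_real_interval(5) derf nle _ conv]
    obtain g where g: "\<forall>u\<in>{0..N}. (\<lambda>n. xs n u) \<longlonglongrightarrow> g u \<and> (g has_derivative (\<lambda>h. h *\<^sub>R F (y u))) (at u within {0..N})"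
      unfolding N_def using t by auto
    have gy: "g u = y u" if "u \<in> {0..N}" for u
    proof -
      have "(\<lambda>n. xs n u) \<longlonglongrightarrow> g u" using g that by blast
      moreover have "(\<lambda>n. xs n u) \<longlonglongrightarrow> y u" using y that by auto
      ultimately show ?thesis by (rule LIMSEQ_unique)
    qed
    have tN: "t \<in> {0..N}" using t by (simp add: N_def)
    have "(y has_derivative (\<lambda>h. h *\<^sub>R F (y t))) (at t within {0..N})"
      using has_derivative_transform[OF tN, of y g] gy g tN by auto
    moreover have "at t within {0..N} = at t within {0..}"
      by (rule at_within_nhd[of _ "{..<N}"]) (auto simp: N_def)
    ultimately show ?thesis by (simp add: has_vector_derivative_def)
  qed
  then have "ode_solution F y" unfolding ode_solution_def nonauto_solution_def by auto
  then show ?thesis using y by blast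
qed

lemma uniform_hit:
  fixes F :: "'a::euclidean_space \<Rightarrow> 'a"
  assumes lip: "\<forall>a b. norm (F a - F b) \<le> L * norm (a - b)" and L: "L \<ge> 0"
    and att: "\<forall>x. ode_solution F x \<longrightarrow> (x \<longlongrightarrow> ts) at_top"
    and d: "d > 0"
  shows "\<exists>T. \<forall>x. ode_solution F x \<and> norm (x 0 - ts) \<le> R \<longrightarrow> (\<exists>s\<in>{0..T}. norm (x s - ts) < d)"
proof (rule ccontr)
  assume "\<not> ?thesis"
  then have "\<forall>n::nat. \<exists>x. ode_solution F x \<and> norm (x 0 - ts) \<le> R \<and> (\<forall>s\<in>{0..real n}. norm (x s - ts) \<ge> d)"
    by (meson not_le)
  then obtain xs where xs: "\<And>n. ode_solution F (xs n)" "\<And>n. norm (xs n 0 - ts) \<le> R"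
    "\<And>n s. s \<in> {0..real n} \<Longrightarrow> norm (xs n s - ts) \<ge> d"
    by metis
  have hc: "\<forall>n. xs n 0 \<in> cball ts R" using xs(2) by (simp add: dist_norm norm_minus_commute)
  have sc: "seq_compact (cball ts R)" by (rule compact_imp_seq_compact[OF compact_cball])
  have "\<exists>l r. strict_mono r \<and> ((\<lambda>n. xs n 0) \<circ> r) \<longlonglongrightarrow> l"
    using sc[unfolded seq_compact_def, rule_format, of "\<lambda>n. xs n 0"] hc by auto
  then obtain y0 r where r: "strict_mono r" "((\<lambda>n. xs n 0) \<circ> r) \<longlonglongrightarrow> y0" by blast
  have "\<exists>y. ode_solution F y \<and> (\<forall>t\<ge>0. (\<lambda>n. xs (r n) t) \<longlonglongrightarrow> y t)"
    by (rule limit_solution[OF lip L, of "\<lambda>n. xs (r n)" y0]) (use xs(1) r(2) in \<open>auto simp: o_def\<close>)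
  then obtain y where y: "ode_solution F y" "\<And>t. t \<ge> 0 \<Longrightarrow> (\<lambda>n. xs (r n) t) \<longlonglongrightarrow> y t" by blast
  have "(y \<longlongrightarrow> ts) at_top" using att y(1) by blast
  then have "\<forall>\<^sub>F t in at_top. dist (y t) ts < d / 2" using d unfolding tendsto_iff by (meson half_gt_zero)
  then obtain t1 where t1: "\<And>t. t \<ge> t1 \<Longrightarrow> dist (y t) ts < d / 2" by (auto simp: eventually_at_top_linorder)
  define t where "t = max t1 0"
  have t: "t \<ge> 0" "dist (y t) ts < d / 2" using t1 by (auto simp: t_def)
  have "\<forall>\<^sub>F n in sequentially. dist (xs (r n) t) (y t) < d / 2"
    using y(2)[OF t(1)] d unfolding tendsto_iff by (meson half_gt_zero)
  moreover have "\<forall>\<^sub>F n in sequentially. real (r n) \<ge> t"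
  proof -
    obtain k :: nat where "real k \<ge> t" using real_arch_simple by blast
    have "real (r n) \<ge> t" if "n \<ge> k" for n
    proof -
      have "k \<le> r n" using seq_suble[OF r(1), of n] that by linarith
      then have "real k \<le> real (r n)" by simp
      then show ?thesis using \<open>real k \<ge> t\<close> by linarith
    qed
    then have "\<forall>n\<ge>k. real (r n) \<ge> t" by blast
    then show ?thesis by (auto simp: eventually_sequentially)
  qed
  ultimately have "\<forall>\<^sub>F n in sequentially. dist (xs (r n) t) (y t) < d / 2 \<and> real (r n) \<ge> t"
    by (rule eventually_conj)
  then obtain N where "\<forall>n\<ge>N. dist (xs (r n) t) (y t) < d / 2 \<and> real (r n) \<ge> t"
    unfolding eventually_sequentially by blast
  then obtain n where n: "dist (xs (r n) t) (y t) < d / 2" "real (r n) \<ge> t" by blast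
  have "norm (xs (r n) t - ts) \<ge> d" using xs(3)[of t "r n"] n t by auto
  moreover have "norm (xs (r n) t - ts) \<le> dist (xs (r n) t) (y t) + dist (y t) ts"
    using dist_triangle[of "xs (r n) t" ts "y t"] by (simp add: dist_norm)
  ultimately show False using n t by simp
qed

lemma const_solution: "F c = 0 \<Longrightarrow> ode_solution F (\<lambda>t. c)"
  unfolding ode_solution_def nonauto_solution_def by (auto intro!: derivative_eq_intros)

lemma gronwall_shift:
  fixes F :: "'a::real_inner \<Rightarrow> 'a"
  assumes lip: "\<forall>a b. norm (F a - F b) \<le> L * norm (a - b)" and L: "L \<ge> 0"
    and x: "ode_solution F x" and F0: "F c = 0" and s: "s \<ge> 0" and t: "t \<ge> 0"
  shows "norm (x (s + t) - c) \<le> norm (x s - c) * exp (L * t)"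
  using gronwall[OF lip L sol_shift[OF x s] const_solution[of F c, OF F0] t] by (simp add: add.commute)

lemma v4_bound:
  fixes F :: "'a::euclidean_space \<Rightarrow> 'a"
  assumes lip: "\<forall>a b. norm (F a - F b) \<le> L * norm (a - b)" and L: "L \<ge> 0"
    and F0: "F ts = 0"
    and V4_nonneg: "\<forall>\<theta>. V \<theta> \<ge> 0"
    and V4_lip: "\<forall>\<theta> \<theta>'. \<bar>V \<theta>' - V \<theta>\<bar> \<le> L_V * norm (\<theta>' - \<theta>)"
    and V4_pos: "\<delta>0 > 0" "\<delta>1 > 0" "T > 0"
    and V4_coercive: "\<forall>\<theta>. norm \<theta> \<ge> 1 / \<delta>0 \<longrightarrow> V \<theta> \<ge> norm \<theta>"
    and V4_drift: "\<forall>x \<tau>. ode_solution F x \<and> \<tau> \<ge> 0 \<and> norm (x \<tau>) > 1 / \<delta>1 \<longrightarrow>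
                      V (x (\<tau> + T)) - V (x \<tau>) \<le> - \<delta>1 * norm (x \<tau>)"
  shows "\<exists>R3 C3 \<gamma>. R3 \<ge> 0 \<and> C3 \<ge> 0 \<and> \<gamma> > 0 \<and>
     (\<forall>x. ode_solution F x \<longrightarrow> (\<forall>t\<ge>0. norm (x t - ts) \<le> R3 + C3 * norm (x 0 - ts) * exp (- \<gamma> * t)))"
proof -
  define LV where "LV = max L_V 1"
  define V0 where "V0 = V 0"
  have LV: "LV \<ge> 1" by (simp add: LV_def)
  have V0: "V0 \<ge> 0" using V4_nonneg by (simp add: V0_def)
  have Vle: "V \<theta> \<le> V0 + LV * norm \<theta>" for \<theta>
  proof -
    have "V \<theta> - V 0 \<le> L_V * norm (\<theta> - 0)" using V4_lip[rule_format, of \<theta> 0] by linarith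
    also have "\<dots> \<le> LV * norm \<theta>" by (simp add: LV_def mult_right_mono)
    finally show ?thesis by (simp add: V0_def)
  qed
  define K where "K = 1 / \<delta>1 + V0 / LV + 1"
  define \<kappa> where "\<kappa> = \<delta>1 / (2 * LV)"
  define q where "q = max (1 - \<kappa>) (1/2)"
  define B1 where "B1 = V0 + LV * (norm ts + (K + norm ts) * exp (L * T))"
  have \<kappa>: "\<kappa> > 0" using V4_pos LV by (simp add: \<kappa>_def)
  have q: "q < 1" "q \<ge> 1/2" using \<kappa> by (auto simp: q_def)
  have K: "K > 0" using V4_pos V0 LV by (simp add: K_def add_pos_nonneg)
  have B1: "B1 \<ge> 0" unfolding B1_def using V0 LV K by (intro add_nonneg_nonneg mult_nonneg_nonneg) auto
  have step: "V (x (\<tau> + T)) \<le> max (q * V (x \<tau>)) B1" if x: "ode_solution F x" and \<tau>: "\<tau> \<ge> 0" for x \<tau>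
  proof (cases "norm (x \<tau>) \<ge> K")
    case True
    have "V0 / LV \<ge> 0" using V0 LV by simp
    then have "1 / \<delta>1 < K" by (simp add: K_def)
    then have gt: "norm (x \<tau>) > 1 / \<delta>1" using True by linarith
    have dr: "V (x (\<tau> + T)) - V (x \<tau>) \<le> - \<delta>1 * norm (x \<tau>)" using V4_drift x \<tau> gt by blast
    have "V0 / LV \<le> K" using V4_pos by (simp add: K_def)
    then have "V0 \<le> K * LV" using LV by (simp add: divide_le_eq)
    also have "\<dots> \<le> LV * norm (x \<tau>)" using True LV by (simp add: mult.commute mult_left_mono)
    finally have "V0 \<le> LV * norm (x \<tau>)" .
    then have "V (x \<tau>) \<le> 2 * LV * norm (x \<tau>)" using Vle[of "x \<tau>"] by linarith
    then have "\<kappa> * V (x \<tau>) \<le> \<kappa> * (2 * LV * norm (x \<tau>))" using \<kappa> by (intro mult_left_mono) auto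
    also have "\<dots> = \<delta>1 * norm (x \<tau>)" using LV by (simp add: \<kappa>_def)
    finally have "V (x (\<tau> + T)) \<le> (1 - \<kappa>) * V (x \<tau>)" using dr by (simp add: algebra_simps)
    also have "\<dots> \<le> q * V (x \<tau>)" using V4_nonneg by (intro mult_right_mono) (auto simp: q_def)
    finally show ?thesis by simp
  next
    case False
    have "norm (x (\<tau> + T) - ts) \<le> norm (x \<tau> - ts) * exp (L * T)"
      using gronwall_shift[OF lip L x F0 \<tau>, of T] V4_pos by simp
    also have "\<dots> \<le> (K + norm ts) * exp (L * T)"
      using False norm_triangle_ineq4[of "x \<tau>" ts] by (intro mult_right_mono) auto
    finally have "norm (x (\<tau> + T)) \<le> norm ts + (K + norm ts) * exp (L * T)"
      using norm_triangle_ineq2[of "x (\<tau> + T)" ts] by linarith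
    then have "V (x (\<tau> + T)) \<le> B1"
      using Vle[of "x (\<tau> + T)"] LV unfolding B1_def by (smt (verit) mult_left_mono)
    then show ?thesis by simp
  qed
  have iter: "V (x (\<tau> + real k * T)) \<le> max (q ^ k * V (x \<tau>)) B1" if x: "ode_solution F x" and \<tau>: "\<tau> \<ge> 0" for x \<tau> k
  proof (induction k)
    case 0 then show ?case by simp
  next
    case (Suc k)
    have "\<tau> + real (Suc k) * T = (\<tau> + real k * T) + T" by (simp add: algebra_simps)
    moreover have "V (x ((\<tau> + real k * T) + T)) \<le> max (q * V (x (\<tau> + real k * T))) B1"
      using step[OF x, of "\<tau> + real k * T"] \<tau> V4_pos by simp
    ultimately have "V (x (\<tau> + real (Suc k) * T)) \<le> max (q * V (x (\<tau> + real k * T))) B1"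
      by metis
    also have "\<dots> \<le> max (q * max (q ^ k * V (x \<tau>)) B1) B1"
      using Suc q by (intro max.mono mult_left_mono) auto
    also have "\<dots> \<le> max (q ^ Suc k * V (x \<tau>)) B1"
    proof -
      have "q * B1 \<le> B1" using q B1 by (intro mult_left_le_one_le) auto
      then show ?thesis using q by (auto simp: max_def algebra_simps)
    qed
    finally show ?case .
  qed
  define \<gamma> where "\<gamma> = - ln q / T"
  have q0: "q > 0" using q by linarith
  have lnq: "ln q < 0" using q q0 by simp
  have \<gamma>: "\<gamma> > 0" using lnq V4_pos by (simp add: \<gamma>_def divide_neg_pos)
  define R3 where "R3 = exp (L * T) * (norm ts + 1 / \<delta>0 + B1 + V0 + LV * norm ts)"
  define C3 where "C3 = exp (L * T) * LV / q"
  have "R3 \<ge> 0" using B1 V0 LV V4_pos by (simp add: R3_def)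
  moreover have "C3 \<ge> 0" using LV q by (simp add: C3_def)
  moreover have "\<forall>x. ode_solution F x \<longrightarrow> (\<forall>t\<ge>0. norm (x t - ts) \<le> R3 + C3 * norm (x 0 - ts) * exp (- \<gamma> * t))"
  proof (intro allI impI)
    fix x t assume x: "ode_solution F x" and t: "(t::real) \<ge> 0"
    define k where "k = nat \<lfloor>t / T\<rfloor>"
    define s where "s = t - real k * T"
    have tT: "t / T \<ge> 0" using t V4_pos by simp
    have rk: "real k = real_of_int \<lfloor>t/T\<rfloor>" using tT by (simp add: k_def)
    have kT: "real k \<le> t / T" "t / T < real k + 1"
      unfolding rk by (rule of_int_floor_le, rule real_of_int_floor_add_one_gt)
    have ks1: "real k * T \<le> t" using kT(1) V4_pos by (simp add: le_divide_eq)
    have ks2: "t < (real k + 1) * T" using kT(2) V4_pos by (simp add: divide_less_eq)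
    have ks: "real k * T \<le> t" "s < T" "s \<ge> 0" using ks1 ks2
      by (auto simp: s_def algebra_simps)
    have U: "V (x (real k * T)) \<le> max (q ^ k * V (x 0)) B1" using iter[OF x, of 0 k] by simp
    have qk: "q ^ k \<le> exp (- \<gamma> * t) / q"
    proof -
      have "exp (real k * ln q) = exp (ln q) ^ k" by (rule exp_of_nat_mult)
      then have "q ^ k = exp (real k * ln q)" using q0 by simp
      also have "\<dots> \<le> exp ((t / T - 1) * ln q)"
      proof -
        have "(t / T - 1) \<le> real k" using kT by linarith
        then have "real k * ln q \<le> (t / T - 1) * ln q" using lnq by (intro mult_right_mono_neg) auto
        then show ?thesis by simp
      qed
      also have "(t / T - 1) * ln q = - \<gamma> * t - ln q"
        using V4_pos by (simp add: \<gamma>_def field_simps)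
      also have "exp (- \<gamma> * t - ln q) = exp (- \<gamma> * t) / q"
        using q0 by (simp add: exp_diff)
      finally show ?thesis .
    qed
    have nxk: "norm (x (real k * T)) \<le> 1 / \<delta>0 + B1 + q ^ k * V (x 0)"
    proof (cases "norm (x (real k * T)) \<ge> 1 / \<delta>0")
      case True
      then have "norm (x (real k * T)) \<le> V (x (real k * T))" using V4_coercive by blast
      moreover have "0 \<le> q ^ k * V (x 0)" using q0 V4_nonneg by simp
      moreover have "1 / \<delta>0 > 0" using V4_pos by simp
      moreover have "max (q ^ k * V (x 0)) B1 \<le> B1 + q ^ k * V (x 0)"
        using B1 \<open>0 \<le> q ^ k * V (x 0)\<close> by (simp add: max_def)
      ultimately show ?thesis using U by linarith
    next
      case False
      have "0 \<le> q ^ k * V (x 0)" using q V4_nonneg by simp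
      then show ?thesis using False B1 by linarith
    qed
    have Vx0: "V (x 0) \<le> V0 + LV * norm ts + LV * norm (x 0 - ts)"
    proof -
      have "norm (x 0) \<le> norm ts + norm (x 0 - ts)" using norm_triangle_ineq2[of "x 0" ts] by linarith
      then show ?thesis using Vle[of "x 0"] LV by (smt (verit) distrib_left mult_left_mono)
    qed
    have qk0: "0 \<le> q ^ k" "q ^ k \<le> 1" using q by (auto intro: power_le_one)
    have "norm (x t - ts) = norm (x (real k * T + s) - ts)" by (simp add: s_def)
    also have "\<dots> \<le> norm (x (real k * T) - ts) * exp (L * s)"
      using gronwall_shift[OF lip L x F0 _ ks(3)] V4_pos by simp
    also have "\<dots> \<le> norm (x (real k * T) - ts) * exp (L * T)"
      using ks L by (intro mult_left_mono) (auto intro: mult_left_mono)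
    also have "\<dots> \<le> (norm ts + 1 / \<delta>0 + B1 + q ^ k * V (x 0)) * exp (L * T)"
      using nxk norm_triangle_ineq4[of "x (real k * T)" ts] by (intro mult_right_mono) auto
    also have "\<dots> \<le> (norm ts + 1 / \<delta>0 + B1 + (V0 + LV * norm ts) + q ^ k * (LV * norm (x 0 - ts))) * exp (L * T)"
    proof -
      have "q ^ k * V (x 0) \<le> q ^ k * (V0 + LV * norm ts) + q ^ k * (LV * norm (x 0 - ts))"
        using mult_left_mono[OF Vx0 qk0(1)] by (simp add: algebra_simps)
      moreover have "q ^ k * (V0 + LV * norm ts) \<le> V0 + LV * norm ts"
        using qk0 V0 LV by (intro mult_left_le_one_le) auto
      ultimately show ?thesis by (intro mult_right_mono) auto
    qed
    also have "\<dots> = R3 + q ^ k * (LV * norm (x 0 - ts)) * exp (L * T)"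
      by (simp add: R3_def algebra_simps)
    also have "\<dots> \<le> R3 + (exp (- \<gamma> * t) / q) * (LV * norm (x 0 - ts)) * exp (L * T)"
      using qk LV by (intro add_left_mono mult_right_mono) auto
    also have "\<dots> = R3 + C3 * norm (x 0 - ts) * exp (- \<gamma> * t)"
      by (simp add: C3_def)
    finally show "norm (x t - ts) \<le> R3 + C3 * norm (x 0 - ts) * exp (- \<gamma> * t)" .
  qed
  ultimately show ?thesis using \<gamma> by blast
qed

lemma local_exp:
  fixes F :: "'a::euclidean_space \<Rightarrow> 'a" and S :: "'a \<Rightarrow> 'b::euclidean_space" and A :: "'a \<Rightarrow> 'a"
  assumes Fd: "(F has_derivative A) (at ts)" and F0: "F ts = 0"
    and S: "linear S" "\<forall>v. S v = 0 \<longrightarrow> v = 0"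
    and c: "c > 0" "\<forall>v. inner (S v) (S (A v)) \<le> - c * (norm (S v))^2"
    and stab: "\<forall>e>0. \<exists>d>0. \<forall>x. ode_solution F x \<and> norm (x 0 - ts) < d \<longrightarrow> (\<forall>t\<ge>0. norm (x t - ts) < e)"
  shows "\<exists>r>0. \<exists>C \<delta>. \<delta> > 0 \<and> (\<forall>x. ode_solution F x \<and> norm (x 0 - ts) < r \<longrightarrow>
           (\<forall>t\<ge>0. norm (x t - ts) \<le> C * norm (x 0 - ts) * exp (- \<delta> * t)))"
proof -
  have bl: "bounded_linear S" using S(1) by (simp add: linear_conv_bounded_linear)
  obtain Ms where Ms: "Ms > 0" "\<And>v. norm (S v) \<le> Ms * norm v"
    using linear_bounded_pos[OF S(1)] by blast
  have "inj S" using S by (simp add: linear_injective_0)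
  then obtain m where m: "m > 0" "\<And>v. m * norm v \<le> norm (S v)"
    using linear_inj_bounded_below_pos[OF S(1)] by blast
  define \<eta> where "\<eta> = c * m / (2 * Ms)"
  have \<eta>: "\<eta> > 0" using c m Ms by (simp add: \<eta>_def)
  obtain \<rho> where \<rho>: "\<rho> > 0" "\<And>y. norm (y - ts) < \<rho> \<Longrightarrow> norm (F y - F ts - A (y - ts)) \<le> \<eta> * norm (y - ts)"
    using Fd \<eta> unfolding has_derivative_at_alt by blast
  obtain d where d: "d > 0" "\<And>x. ode_solution F x \<Longrightarrow> norm (x 0 - ts) < d \<Longrightarrow> (\<forall>t\<ge>0. norm (x t - ts) < \<rho>)"
    using stab \<rho>(1) by blast
  have main: "norm (x t - ts) \<le> Ms / m * norm (x 0 - ts) * exp (- (c/2) * t)"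
    if x: "ode_solution F x" and x0: "norm (x 0 - ts) < d" and t: "t \<ge> 0" for x t
  proof -
    define z where "z u = S (x u - ts)" for u
    define \<phi> where "\<phi> u = inner (z u) (z u) * exp (c * u)" for u
    have inb: "norm (x u - ts) < \<rho>" if "u \<ge> 0" for u using d(2)[OF x x0] that by blast
    have ineq: "inner (z u) (S (F (x u))) \<le> - (c/2) * (norm (z u))^2" if u: "u \<ge> 0" for u
    proof -
      define e where "e = x u - ts"
      define R where "R = F (x u) - A e"
      have R: "norm R \<le> \<eta> * norm e" using \<rho>(2)[OF inb[OF u]] F0 by (simp add: R_def e_def)
      have zS: "z u = S e" by (simp add: z_def e_def)
      have "S (F (x u)) = S (A e) + S R" by (simp add: R_def linear_add[OF S(1), symmetric])
      then have "inner (z u) (S (F (x u))) = inner (S e) (S (A e)) + inner (S e) (S R)"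
        by (simp add: zS inner_add_right)
      also have "\<dots> \<le> - c * (norm (S e))^2 + (c/2) * (norm (S e))^2"
      proof (rule add_mono)
        show "inner (S e) (S (A e)) \<le> - c * (norm (S e))^2" using c(2) by blast
        have "inner (S e) (S R) \<le> norm (S e) * norm (S R)" by (rule norm_cauchy_schwarz)
        also have "\<dots> \<le> norm (S e) * (Ms * (\<eta> * norm e))"
        proof (rule mult_left_mono)
          have "norm (S R) \<le> Ms * norm R" by (rule Ms(2))
          also have "\<dots> \<le> Ms * (\<eta> * norm e)" using R Ms by (intro mult_left_mono) auto
          finally show "norm (S R) \<le> Ms * (\<eta> * norm e)" .
        qed simp
        also have "\<dots> \<le> norm (S e) * (Ms * (\<eta> * (norm (S e) / m)))"
        proof (intro mult_left_mono)
          show "norm e \<le> norm (S e) / m" using m(2)[of e] m(1) by (simp add: field_simps)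
        qed (use Ms \<eta> in auto)
        also have "\<dots> = (c/2) * (norm (S e))^2"
          using Ms m by (simp add: \<eta>_def power2_eq_square field_simps)
        finally show "inner (S e) (S R) \<le> (c/2) * (norm (S e))^2" .
      qed
      also have "\<dots> = - (c/2) * (norm (z u))^2" by (simp add: zS)
      finally show ?thesis .
    qed
    have "\<phi> t \<le> \<phi> 0"
    proof (rule DERIV_nonpos_imp_decreasing_open[OF t])
      have "continuous_on {0..t} (\<lambda>u. x u - ts)"
        using continuous_on_subset[OF sol_cont[OF x], of "{0..t}"] by (auto intro!: continuous_intros)
      then have "continuous_on {0..t} z"
        unfolding z_def by (rule bounded_linear.continuous_on[OF bl])
      then show "continuous_on {0..t} \<phi>"
        unfolding \<phi>_def by (auto intro!: continuous_intros)
    next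
      fix u :: real assume u: "0 < u" "u < t"
      have "((\<lambda>u. x u - ts) has_derivative (\<lambda>h. h *\<^sub>R F (x u))) (at u)"
        using sol_at[OF x u(1)] unfolding has_vector_derivative_def
        by (auto intro!: derivative_eq_intros)
      from bounded_linear.has_derivative[OF bl this]
      have "(z has_derivative (\<lambda>h. h *\<^sub>R S (F (x u)))) (at u)"
        unfolding z_def by (simp add: linear_scale[OF S(1)])
      then have dz: "(z has_vector_derivative S (F (x u))) (at u)"
        by (simp add: has_vector_derivative_def)
      have "(\<phi> has_real_derivative (2 * inner (z u) (S (F (x u))) * exp (c * u)
             + inner (z u) (z u) * (exp (c * u) * c))) (at u)"
        unfolding \<phi>_def
        using dz unfolding has_vector_derivative_def has_field_derivative_def
        by (auto intro!: derivative_eq_intros simp: algebra_simps inner_commute)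
      moreover have "2 * inner (z u) (S (F (x u))) * exp (c * u) + inner (z u) (z u) * (exp (c * u) * c) \<le> 0"
      proof -
        have "2 * inner (z u) (S (F (x u))) + c * inner (z u) (z u) \<le> 0"
          using ineq[of u] u by (simp add: power2_norm_eq_inner)
        then have "exp (c * u) * (2 * inner (z u) (S (F (x u))) + c * inner (z u) (z u)) \<le> 0"
          by (intro mult_nonneg_nonpos) auto
        then show ?thesis by (simp add: algebra_simps)
      qed
      ultimately show "\<exists>y. (\<phi> has_real_derivative y) (at u) \<and> y \<le> 0" by blast
    qed
    then have "(norm (z t))^2 * exp (c * t) \<le> (norm (z 0))^2"
      by (simp add: \<phi>_def power2_norm_eq_inner)
    then have "(norm (z t))^2 \<le> (norm (z 0))^2 * exp (- (c * t))"
      by (simp add: exp_minus field_simps)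
    also have "\<dots> = (norm (z 0) * exp (- (c/2) * t))^2"
      by (simp add: power_mult_distrib power2_eq_square mult.assoc exp_add[symmetric])
    finally have zt: "norm (z t) \<le> norm (z 0) * exp (- (c/2) * t)"
      by (rule power2_le_imp_le) simp
    have "m * norm (x t - ts) \<le> norm (z t)" using m(2) by (simp add: z_def)
    also have "\<dots> \<le> norm (z 0) * exp (- (c/2) * t)" by (rule zt)
    also have "\<dots> \<le> (Ms * norm (x 0 - ts)) * exp (- (c/2) * t)"
      using Ms(2) by (intro mult_right_mono) (auto simp: z_def)
    finally show ?thesis using m(1) by (simp add: field_simps)
  qed
  show ?thesis
    using d(1) c(1) main by (intro exI[of _ d] conjI exI[of _ "Ms / m"] exI[of _ "c/2"]) auto
qed

lemma inner_complex_mult_self: "inner (x::complex) (b * x) = Re b * (cmod x)^2"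
  unfolding cmod_power2 inner_complex_def by (simp add: algebra_simps power2_eq_square)

lemma diag_dom:
  fixes \<beta> :: "nat \<Rightarrow> nat \<Rightarrow> complex" and u :: "nat \<Rightarrow> complex"
  assumes diag: "\<forall>i<n. Re (\<beta> i i) \<le> -\<mu>" and off: "\<forall>i<n. \<forall>m<n. m \<noteq> i \<longrightarrow> cmod (\<beta> i m) \<le> \<eta>"
    and \<eta>: "\<eta> \<ge> 0" and small: "real n * \<eta> \<le> \<mu> / 2"
  shows "(\<Sum>i<n. inner (u i) (\<Sum>m<n. \<beta> i m * u m)) \<le> - (\<mu> / 2) * (\<Sum>i<n. (cmod (u i))^2)"
proof -
  define S1 where "S1 = (\<Sum>m<n. cmod (u m))"
  define S2 where "S2 = (\<Sum>i<n. (cmod (u i))^2)"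
  have each: "inner (u i) (\<Sum>m<n. \<beta> i m * u m) \<le> - \<mu> * (cmod (u i))^2 + \<eta> * cmod (u i) * S1"
    if i: "i < n" for i
  proof -
    define off where "off = (\<Sum>m<n. (if m = i then 0 else \<beta> i m) * u m)"
    have split: "(\<Sum>m<n. \<beta> i m * u m) = \<beta> i i * u i + off"
    proof -
      have "(\<Sum>m<n. \<beta> i m * u m) = (\<Sum>m<n. (if m = i then \<beta> i i * u m else 0) + (if m = i then 0 else \<beta> i m) * u m)"
        by (rule sum.cong) auto
      also have "\<dots> = \<beta> i i * u i + off"
        using i by (simp add: sum.distrib off_def)
      finally show ?thesis .
    qed
    have "inner (u i) off \<le> cmod (u i) * cmod off" using norm_cauchy_schwarz[of "u i" off] by simp
    also have "\<dots> \<le> cmod (u i) * (\<eta> * S1)"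
    proof (rule mult_left_mono)
      have "cmod off \<le> (\<Sum>m<n. cmod ((if m = i then 0 else \<beta> i m) * u m))"
        unfolding off_def by (rule norm_sum)
      also have "\<dots> \<le> (\<Sum>m<n. \<eta> * cmod (u m))"
      proof (rule sum_mono)
        fix m assume m: "m \<in> {..<n}"
        show "cmod ((if m = i then 0 else \<beta> i m) * u m) \<le> \<eta> * cmod (u m)"
          using off i m \<eta> by (auto simp: norm_mult intro: mult_right_mono)
      qed
      also have "\<dots> = \<eta> * S1" by (simp add: S1_def sum_distrib_left)
      finally show "cmod off \<le> \<eta> * S1" .
    qed simp
    finally have o: "inner (u i) off \<le> \<eta> * cmod (u i) * S1" by (simp add: mult.assoc mult.left_commute)
    have d: "inner (u i) (\<beta> i i * u i) \<le> - \<mu> * (cmod (u i))^2"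
    proof -
      have "Re (\<beta> i i) * (cmod (u i))^2 \<le> (- \<mu>) * (cmod (u i))^2"
        using diag i by (intro mult_right_mono) auto
      then show ?thesis by (simp add: inner_complex_mult_self)
    qed
    show ?thesis using o d by (simp add: split inner_add_right)
  qed
  have "(\<Sum>i<n. inner (u i) (\<Sum>m<n. \<beta> i m * u m)) \<le> (\<Sum>i<n. - \<mu> * (cmod (u i))^2 + \<eta> * cmod (u i) * S1)"
    by (rule sum_mono) (use each in auto)
  also have "\<dots> = (\<Sum>i<n. - \<mu> * (cmod (u i))^2) + (\<Sum>i<n. \<eta> * cmod (u i) * S1)"
    by (rule sum.distrib)
  also have "(\<Sum>i<n. - \<mu> * (cmod (u i))^2) = - \<mu> * S2"
    by (simp add: S2_def sum_distrib_left)
  also have "(\<Sum>i<n. \<eta> * cmod (u i) * S1) = (\<Sum>i<n. cmod (u i)) * (\<eta> * S1)"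
    by (simp add: sum_distrib_left[symmetric] mult_ac)
  also have "- \<mu> * S2 + (\<Sum>i<n. cmod (u i)) * (\<eta> * S1) = - \<mu> * S2 + \<eta> * S1^2"
    by (simp add: S1_def power2_eq_square)
  also have "\<dots> \<le> - \<mu> * S2 + \<eta> * (S2 * real n)"
  proof -
    have "S1^2 \<le> S2 * real n" using sum_squared_le_sum_of_squares[of "\<lambda>m. cmod (u m)" "{..<n}"]
      by (simp add: S1_def S2_def)
    then show ?thesis using \<eta> by (simp add: mult_left_mono)
  qed
  also have "\<dots> \<le> - (\<mu> / 2) * S2"
  proof -
    have S2: "S2 \<ge> 0" by (simp add: S2_def sum_nonneg)
    have "\<eta> * (S2 * real n) = (real n * \<eta>) * S2" by simp
    also have "\<dots> \<le> (\<mu> / 2) * S2" using small S2 by (rule mult_right_mono)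
    finally show ?thesis by simp
  qed
  finally show ?thesis by (simp add: S2_def)
qed


lemma hurwitz_eig:
  fixes A :: "real^'n^'n"
  assumes hw: "hurwitz A" and h: "bij_betw h {0..<n} (UNIV :: 'n set)"
    and ev: "eigenvector (Matrix.mat n n (\<lambda>(i,j). complex_of_real (A $ h i $ h j))) v b"
  shows "Re b < 0"
proof -
  define Mc where "Mc = Matrix.mat n n (\<lambda>(i,j). complex_of_real (A $ h i $ h j))"
  define g where "g = inv_into {0..<n} h"
  have hg: "h (g k) = k" for k using h unfolding g_def by (meson UNIV_I bij_betw_inv_into_right)
  have gh: "g (h i) = i" if "i < n" for i using h that unfolding g_def by (simp add: bij_betw_inv_into_left)
  have gn: "g k < n" for k using h unfolding g_def
    by (metis UNIV_I atLeastLessThan_iff bij_betw_def inv_into_into)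
  have sum_h: "(\<Sum>k\<in>UNIV. f k) = (\<Sum>i\<in>{0..<n}. f (h i))" for f :: "'n \<Rightarrow> complex"
    using sum.reindex_bij_betw[OF h, of f] by simp
  from ev have v: "v \<in> carrier_vec n" "v \<noteq> 0\<^sub>v n" "Mc *\<^sub>v v = b \<cdot>\<^sub>v v"
    unfolding eigenvector_def Mc_def by auto
  define w :: "complex^'n" where "w = (\<chi> k. vec_index v (g k))"
  have "w \<noteq> 0"
  proof
    assume w0: "w = 0"
    have "v = 0\<^sub>v n"
    proof (rule eq_vecI)
      fix i assume "i < dim_vec (0\<^sub>v n :: complex vec)"
      then have i: "i < n" by simp
      have "vec_index v i = w $ h i" using gh[OF i] by (simp add: w_def)
      then show "vec_index v i = vec_index (0\<^sub>v n) i" using w0 i by simp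
    qed (use v in simp)
    with v(2) show False by simp
  qed
  define Ac :: "complex^'n^'n" where "Ac = (\<chi> i j. complex_of_real (A $ i $ j))"
  have "(Finite_Cartesian_Product.mat b - Ac) *v w = 0"
  unfolding Finite_Cartesian_Product.vec_eq_iff
  proof (rule allI)
    fix k :: 'n
    define i where "i = g k"
    have i: "i < n" "h i = k" using gn hg by (auto simp: i_def)
    have "(Finite_Cartesian_Product.mat b *v w) $ k = (\<Sum>j\<in>UNIV. (if k = j then b else 0) * w $ j)"
      unfolding matrix_vector_mult_def Finite_Cartesian_Product.mat_def by simp
    also have "\<dots> = (\<Sum>j\<in>UNIV. if k = j then b * w $ j else 0)"
      by (rule sum.cong) auto
    also have "\<dots> = b * w $ k" by simp
    finally have "(Finite_Cartesian_Product.mat b *v w) $ k = b * w $ k" .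
    moreover have "(Ac *v w) $ k = b * w $ k"
    proof -
      have "(Ac *v w) $ k = (\<Sum>j\<in>UNIV. Ac $ k $ j * w $ j)" by (simp add: matrix_vector_mult_def)
      also have "\<dots> = (\<Sum>l\<in>{0..<n}. Ac $ k $ h l * w $ h l)" by (rule sum_h)
      also have "\<dots> = (\<Sum>l\<in>{0..<n}. Mc $$ (i,l) * vec_index v l)"
        by (rule sum.cong) (auto simp: Ac_def w_def Mc_def gh i(1) i(2)[symmetric])
      also have "\<dots> = vec_index (Mc *\<^sub>v v) i"
        using i v(1) by (simp add: Mc_def scalar_prod_def)
      also have "\<dots> = b * vec_index v i" using v(3) i v(1) by simp
      also have "\<dots> = b * w $ k" by (simp add: w_def i_def)
      finally show ?thesis .
    qed
    ultimately show "((Finite_Cartesian_Product.mat b - Ac) *v w) $ k = 0 $ k"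
      by (simp add: matrix_vector_mult_diff_rdistrib)
  qed
  then have "\<not> (\<forall>x. (Finite_Cartesian_Product.mat b - Ac) *v x = 0 \<longrightarrow> x = 0)" using \<open>w \<noteq> 0\<close> by blast
  then have "\<not> invertible (Finite_Cartesian_Product.mat b - Ac)"
    by (simp add: invertible_left_inverse matrix_left_invertible_ker)
  then have "Determinants.det (Finite_Cartesian_Product.mat b - Ac) = 0" by (simp add: invertible_det_nz)
  then show ?thesis using hw unfolding hurwitz_def Ac_def by blast
qed

lemma hurwitz_lyap:
  fixes A :: "real^'n^'n"
  assumes hw: "hurwitz A"
  shows "\<exists>S :: real^'n \<Rightarrow> complex^'n. linear S \<and> (\<forall>v. S v = 0 \<longrightarrow> v = 0) \<and>
           (\<exists>c>0. \<forall>v. inner (S v) (S (A *v v)) \<le> - c * (norm (S v))^2)"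
proof -
  define n where "n = CARD('n)"
  have n0: "n > 0" by (simp add: n_def)
  obtain h :: "nat \<Rightarrow> 'n" where h: "bij_betw h {0..<n} UNIV"
    using ex_bij_betw_nat_finite[of "UNIV::'n set"] by (auto simp: n_def)
  define g where "g = inv_into {0..<n} h"
  have hg: "h (g k) = k" for k using h unfolding g_def by (meson UNIV_I bij_betw_inv_into_right)
  have gh: "g (h i) = i" if "i < n" for i using h that unfolding g_def by (simp add: bij_betw_inv_into_left)
  have gn: "g k < n" for k using h unfolding g_def
    by (metis UNIV_I atLeastLessThan_iff bij_betw_def inv_into_into)
  have sum_h: "(\<Sum>k\<in>UNIV. f k) = (\<Sum>i\<in>{0..<n}. f (h i))" for f :: "'n \<Rightarrow> 'b::comm_monoid_add"
    using sum.reindex_bij_betw[OF h, of f] by simp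
  define Mc where "Mc = Matrix.mat n n (\<lambda>(i,j). complex_of_real (A $ h i $ h j))"
  have Mc: "Mc \<in> carrier_mat n n" by (simp add: Mc_def)
  obtain es where es: "char_poly Mc = (\<Prod>a\<leftarrow>es. [:- a, 1:])" using char_poly_factorized[OF Mc] by blast
  obtain B P Q where sd: "schur_decomposition Mc es = (B, P, Q)" by (cases "schur_decomposition Mc es") auto
  from schur_decomposition[OF Mc es sd] have sim: "similar_mat_wit Mc B P Q"
    and ut: "upper_triangular B" and dg: "diag_mat B = es" by auto
  from sim Mc have carr: "B \<in> carrier_mat n n" "P \<in> carrier_mat n n" "Q \<in> carrier_mat n n"
    and PQ: "P * Q = 1\<^sub>m n" and QP: "Q * P = 1\<^sub>m n" and MPBQ: "Mc = P * B * Q"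
    unfolding similar_mat_wit_def Let_def by auto
  have QM: "Q * Mc = B * Q"
  proof -
    have "Q * Mc = Q * (P * (B * Q))" using carr by (simp add: MPBQ)
    also have "\<dots> = (Q * P) * (B * Q)" by (rule assoc_mult_mat[symmetric]) (use carr in auto)
    also have "\<dots> = B * Q" using carr by (simp add: QP)
    finally show ?thesis .
  qed
  have QMe: "(\<Sum>j\<in>{0..<n}. Q $$ (i,j) * Mc $$ (j,l)) = (\<Sum>m\<in>{0..<n}. B $$ (i,m) * Q $$ (m,l))"
    if "i < n" "l < n" for i l
  proof -
    have "(Q * Mc) $$ (i,l) = (B * Q) $$ (i,l)" by (simp add: QM)
    then show ?thesis using that carr Mc by (simp add: scalar_prod_def)
  qed
  have PQe: "(\<Sum>i\<in>{0..<n}. P $$ (l,i) * Q $$ (i,j)) = (if l = j then 1 else 0)"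
    if "l < n" "j < n" for l j
  proof -
    have "(P * Q) $$ (l,j) = (1\<^sub>m n) $$ (l,j)" by (simp add: PQ)
    then show ?thesis using that carr by (simp add: scalar_prod_def)
  qed
  have upper: "B $$ (i,m) = 0" if "i < n" "m < i" for i m
    using ut that carr by (auto intro: upper_triangularD)
  have diagneg: "Re (B $$ (i,i)) < 0" if i: "i < n" for i
  proof -
    define b where "b = B $$ (i,i)"
    have bes: "b \<in> set es" using i carr by (auto simp: dg[symmetric] diag_mat_def b_def)
    have "poly (char_poly Mc) b = 0" unfolding es using bes
      by (force simp: poly_prod_list prod_list_zero_iff)
    then have "eigenvalue Mc b" by (simp add: eigenvalue_root_char_poly[OF Mc])
    then obtain v where "eigenvector Mc v b" unfolding eigenvalue_def by blast
    then show ?thesis using hurwitz_eig[OF hw h] by (simp add: Mc_def b_def)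
  qed
  define \<mu> where "\<mu> = Min ((\<lambda>i. - Re (B $$ (i,i))) ` {0..<n})"
  have \<mu>: "\<mu> > 0" using n0 diagneg by (simp add: \<mu>_def Min_gr_iff)
  have \<mu>le: "Re (B $$ (i,i)) \<le> - \<mu>" if "i < n" for i
  proof -
    have "- Re (B $$ (i,i)) \<in> (\<lambda>i. - Re (B $$ (i,i))) ` {0..<n}" using that by auto
    then have "\<mu> \<le> - Re (B $$ (i,i))" unfolding \<mu>_def by (intro Min_le) auto
    then show ?thesis by linarith
  qed
  define Bm where "Bm = Max ((\<lambda>(i,m). cmod (B $$ (i,m))) ` ({0..<n} \<times> {0..<n}))"
  have Bmle: "cmod (B $$ (i,m)) \<le> Bm" if "i < n" "m < n" for i m
    unfolding Bm_def using that by (intro Max_ge) (auto intro!: image_eqI[where x = "(i,m)"])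
  have Bm0: "Bm \<ge> 0" using Bmle[of 0 0] n0 by (meson norm_ge_zero order_trans)
  define \<epsilon> where "\<epsilon> = min 1 (\<mu> / (2 * (real n * Bm + 1)))"
  have nB: "real n * Bm + 1 > 0" using Bm0 by (simp add: add_nonneg_pos)
  have "\<mu> / (2 * (real n * Bm + 1)) > 0" using \<mu> nB by (intro divide_pos_pos) auto
  then have \<epsilon>: "\<epsilon> > 0" "\<epsilon> \<le> 1" by (auto simp: \<epsilon>_def)
  define \<eta> where "\<eta> = \<epsilon> * Bm"
  have \<eta>: "\<eta> \<ge> 0" using \<epsilon> Bm0 by (simp add: \<eta>_def)
  have small: "real n * \<eta> \<le> \<mu> / 2"
  proof -
    have "real n * \<eta> = \<epsilon> * (real n * Bm)" by (simp add: \<eta>_def)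
    also have "\<dots> \<le> (\<mu> / (2 * (real n * Bm + 1))) * (real n * Bm + 1)"
      using \<epsilon> Bm0 \<mu> by (intro mult_mono) (auto simp: \<epsilon>_def)
    also have "\<dots> = \<mu> / 2" using nB by (simp add: field_simps)
    finally show ?thesis .
  qed
  define \<beta> where "\<beta> i m = B $$ (i,m) * complex_of_real (\<epsilon> ^ (m - i))" for i m
  have \<beta>diag: "\<forall>i<n. Re (\<beta> i i) \<le> - \<mu>" using \<mu>le by (simp add: \<beta>_def)
  have \<beta>off: "\<forall>i<n. \<forall>m<n. m \<noteq> i \<longrightarrow> cmod (\<beta> i m) \<le> \<eta>"
  proof (intro allI impI)
    fix i m assume im: "i < n" "m < n" "m \<noteq> i"
    show "cmod (\<beta> i m) \<le> \<eta>"
    proof (cases "m < i")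
      case True then show ?thesis using upper im \<eta> by (simp add: \<beta>_def)
    next
      case False
      then have "1 \<le> m - i" using im by simp
      then have "\<epsilon> ^ (m - i) \<le> \<epsilon> ^ 1" using \<epsilon> by (intro power_decreasing) auto
      moreover have "cmod (complex_of_real (\<epsilon> ^ (m - i))) = \<epsilon> ^ (m - i)"
        using \<epsilon> by (simp only: norm_of_real) simp
      ultimately have "cmod (\<beta> i m) \<le> Bm * \<epsilon>"
        using Bmle[OF im(1,2)] \<epsilon> Bm0 unfolding \<beta>_def norm_mult by (intro mult_mono) auto
      then show ?thesis by (simp add: \<eta>_def mult.commute)
    qed
  qed
  define qv where "qv v i = (\<Sum>j\<in>{0..<n}. Q $$ (i,j) * complex_of_real (v $ h j))" for v :: "real^'n" and i
  define S :: "real^'n \<Rightarrow> complex^'n" where "S v = (\<chi> k. complex_of_real ((1/\<epsilon>) ^ g k) * qv v (g k))" for v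
  have Sh: "S v $ h i = complex_of_real ((1/\<epsilon>) ^ i) * qv v i" if "i < n" for v i
    using that by (simp add: S_def gh)
  have lin: "linear S"
  proof (rule linearI)
    fix x y :: "real^'n"
    show "S (x + y) = S x + S y"
      unfolding Finite_Cartesian_Product.vec_eq_iff
      by (simp add: S_def qv_def distrib_left sum.distrib)
  next
    fix r :: real and x :: "real^'n"
    have qr: "qv (r *\<^sub>R x) i = r *\<^sub>R qv x i" for i
      unfolding qv_def vector_scaleR_component by (simp add: scaleR_sum_right scaleR_conv_of_real mult_ac sum_distrib_left)
    show "S (r *\<^sub>R x) = r *\<^sub>R S x"
      unfolding Finite_Cartesian_Product.vec_eq_iff
      by (simp add: S_def qr)
  qed
  have inj: "\<forall>v. S v = 0 \<longrightarrow> v = 0"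
  proof (intro allI impI)
    fix v :: "real^'n" assume Sv: "S v = 0"
    have q0: "qv v i = 0" if "i < n" for i
    proof -
      have "complex_of_real ((1/\<epsilon>) ^ i) * qv v i = 0" using Sh[OF that, of v] Sv by simp
      then show ?thesis using \<epsilon> by simp
    qed
    have "complex_of_real (v $ h l) = 0" if l: "l < n" for l
    proof -
      have "(\<Sum>i\<in>{0..<n}. P $$ (l,i) * qv v i) = (\<Sum>i\<in>{0..<n}. \<Sum>j\<in>{0..<n}. P $$ (l,i) * (Q $$ (i,j) * complex_of_real (v $ h j)))"
        by (simp add: qv_def sum_distrib_left)
      also have "\<dots> = (\<Sum>j\<in>{0..<n}. \<Sum>i\<in>{0..<n}. P $$ (l,i) * (Q $$ (i,j) * complex_of_real (v $ h j)))"
        by (rule sum.swap)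
      also have "\<dots> = (\<Sum>j\<in>{0..<n}. (\<Sum>i\<in>{0..<n}. P $$ (l,i) * Q $$ (i,j)) * complex_of_real (v $ h j))"
        by (simp add: sum_distrib_right mult.assoc)
      also have "\<dots> = (\<Sum>j\<in>{0..<n}. (if l = j then 1 else 0) * complex_of_real (v $ h j))"
        by (rule sum.cong) (auto simp: PQe l)
      also have "\<dots> = (\<Sum>j\<in>{0..<n}. if l = j then complex_of_real (v $ h j) else 0)"
        by (rule sum.cong) auto
      also have "\<dots> = complex_of_real (v $ h l)" using l by simp
      finally show ?thesis using q0 by simp
    qed
    then have "v $ k = 0" for k using hg[of k] gn[of k] by (metis of_real_eq_0_iff)
    then show "v = 0" by (simp add: Finite_Cartesian_Product.vec_eq_iff)
  qed
  have key: "inner (S v) (S (A *v v)) \<le> - (\<mu>/2) * (norm (S v))^2" for v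
  proof -
    define u where "u i = S v $ h i" for i
    have Av: "complex_of_real ((A *v v) $ h j) = (\<Sum>l\<in>{0..<n}. Mc $$ (j,l) * complex_of_real (v $ h l))"
      if "j < n" for j
    proof -
      have "(A *v v) $ h j = (\<Sum>k\<in>UNIV. A $ h j $ k * v $ k)" by (simp add: matrix_vector_mult_def)
      also have "\<dots> = (\<Sum>l\<in>{0..<n}. A $ h j $ h l * v $ h l)" by (rule sum_h)
      finally show ?thesis using that by (simp add: Mc_def)
    qed
    have qA: "qv (A *v v) i = (\<Sum>m\<in>{0..<n}. B $$ (i,m) * qv v m)" if i: "i < n" for i
    proof -
      have "qv (A *v v) i = (\<Sum>j\<in>{0..<n}. Q $$ (i,j) * (\<Sum>l\<in>{0..<n}. Mc $$ (j,l) * complex_of_real (v $ h l)))"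
        unfolding qv_def by (rule sum.cong) (auto simp: Av)
      also have "\<dots> = (\<Sum>j\<in>{0..<n}. \<Sum>l\<in>{0..<n}. Q $$ (i,j) * (Mc $$ (j,l) * complex_of_real (v $ h l)))"
        by (simp add: sum_distrib_left)
      also have "\<dots> = (\<Sum>l\<in>{0..<n}. \<Sum>j\<in>{0..<n}. Q $$ (i,j) * (Mc $$ (j,l) * complex_of_real (v $ h l)))"
        by (rule sum.swap)
      also have "\<dots> = (\<Sum>l\<in>{0..<n}. (\<Sum>j\<in>{0..<n}. Q $$ (i,j) * Mc $$ (j,l)) * complex_of_real (v $ h l))"
        by (simp add: sum_distrib_right mult.assoc)
      also have "\<dots> = (\<Sum>l\<in>{0..<n}. (\<Sum>m\<in>{0..<n}. B $$ (i,m) * Q $$ (m,l)) * complex_of_real (v $ h l))"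
        by (rule sum.cong) (auto simp: QMe i)
      also have "\<dots> = (\<Sum>l\<in>{0..<n}. \<Sum>m\<in>{0..<n}. B $$ (i,m) * (Q $$ (m,l) * complex_of_real (v $ h l)))"
        by (simp add: sum_distrib_right mult.assoc)
      also have "\<dots> = (\<Sum>m\<in>{0..<n}. \<Sum>l\<in>{0..<n}. B $$ (i,m) * (Q $$ (m,l) * complex_of_real (v $ h l)))"
        by (rule sum.swap)
      also have "\<dots> = (\<Sum>m\<in>{0..<n}. B $$ (i,m) * qv v m)"
        by (simp add: qv_def sum_distrib_left)
      finally show ?thesis .
    qed
    have SA: "S (A *v v) $ h i = (\<Sum>m<n. \<beta> i m * u m)" if i: "i < n" for i
    proof -
      have "S (A *v v) $ h i = complex_of_real ((1/\<epsilon>) ^ i) * (\<Sum>m\<in>{0..<n}. B $$ (i,m) * qv v m)"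
        using Sh[OF i] qA[OF i] by simp
      also have "\<dots> = (\<Sum>m\<in>{0..<n}. \<beta> i m * u m)"
        unfolding sum_distrib_left
      proof (rule sum.cong)
        fix m assume m: "m \<in> {0..<n}"
        show "complex_of_real ((1/\<epsilon>) ^ i) * (B $$ (i,m) * qv v m) = \<beta> i m * u m"
        proof (cases "m < i")
          case True then show ?thesis using upper i by (simp add: \<beta>_def)
        next
          case False
          have "(1/\<epsilon>) ^ i = \<epsilon> ^ (m - i) * (1/\<epsilon>) ^ m"
          proof -
            have "\<epsilon> ^ m = \<epsilon> ^ (m - i) * \<epsilon> ^ i" using False by (simp add: power_add[symmetric])
            then show ?thesis using \<epsilon> by (simp add: power_one_over field_simps)
          qed
          then show ?thesis using m by (simp add: \<beta>_def u_def Sh mult_ac)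
        qed
      qed simp
      finally show ?thesis by (simp add: atLeast0LessThan)
    qed
    have "inner (S v) (S (A *v v)) = (\<Sum>i\<in>{0..<n}. inner (S v $ h i) (S (A *v v) $ h i))"
      unfolding inner_vec_def by (rule sum_h)
    also have "\<dots> = (\<Sum>i<n. inner (u i) (\<Sum>m<n. \<beta> i m * u m))"
      by (simp add: atLeast0LessThan u_def SA)
    also have "\<dots> \<le> - (\<mu>/2) * (\<Sum>i<n. (cmod (u i))^2)"
      by (rule diag_dom[OF \<beta>diag \<beta>off \<eta> small])
    also have "(\<Sum>i<n. (cmod (u i))^2) = (norm (S v))^2"
    proof -
      have "(norm (S v))^2 = inner (S v) (S v)" by (simp add: power2_norm_eq_inner)
      also have "\<dots> = (\<Sum>i\<in>{0..<n}. inner (S v $ h i) (S v $ h i))"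
        unfolding inner_vec_def by (rule sum_h)
      also have "\<dots> = (\<Sum>i<n. (cmod (u i))^2)"
        by (simp add: atLeast0LessThan u_def power2_norm_eq_inner)
      finally show ?thesis by simp
    qed
    finally show ?thesis .
  qed
  show ?thesis using lin inj key \<mu> by (intro exI[of _ S] conjI exI[of _ "\<mu>/2"]) auto
qed

theorem proposition2p8:
  fixes w ph :: "real^'K" and G0 :: "real^'K \<Rightarrow> real^'m"
    and P :: "(complex^'K) measure"
    and f :: "real^'d \<Rightarrow> real^'m \<Rightarrow> real^'d" and fbar :: "real^'d \<Rightarrow> real^'d"
    and Abar :: "real^'d \<Rightarrow> real^'d^'d"
    and V :: "real^'d \<Rightarrow> real" and L_f L_V \<delta>0 \<delta>1 T :: real and \<theta>s :: "real^'d"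
  assumes w_pos: "\<forall>i. w$i > 0"
    and P_unif: "uniform_on_orbit w ph P"
    and G0_taylor: "abs_summable_taylor G0"
    and fbar_eq: "\<forall>\<theta>. fbar \<theta> = (\<integral>z. f \<theta> (probe G0 z) \<partial>P)"
    and fbar_deriv: "\<forall>\<theta>. (fbar has_derivative (\<lambda>h. Abar \<theta> *v h)) (at \<theta>)"
    and Abar_cont: "continuous_on UNIV Abar"
    and A1_fbar: "\<forall>\<theta> \<theta>'. norm (fbar \<theta>' - fbar \<theta>) \<le> L_f * norm (\<theta>' - \<theta>)"
    and A1_f: "\<forall>\<theta> \<theta>' \<xi> \<xi>'. norm (f \<theta>' \<xi> - f \<theta> \<xi>) + norm (f \<theta> \<xi>' - f \<theta> \<xi>)
                  \<le> L_f * (norm (\<theta>' - \<theta>) + norm (\<xi>' - \<xi>))"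
    and V4_nonneg: "\<forall>\<theta>. V \<theta> \<ge> 0"
    and V4_lip: "\<forall>\<theta> \<theta>'. \<bar>V \<theta>' - V \<theta>\<bar> \<le> L_V * norm (\<theta>' - \<theta>)"
    and V4_pos: "\<delta>0 > 0" "\<delta>1 > 0" "T > 0"
    and V4_coercive: "\<forall>\<theta>. norm \<theta> \<ge> 1 / \<delta>0 \<longrightarrow> V \<theta> \<ge> norm \<theta>"
    and V4_drift: "\<forall>x \<tau>. ode_solution fbar x \<and> \<tau> \<ge> 0 \<and> norm (x \<tau>) > 1 / \<delta>1 \<longrightarrow>
                      V (x (\<tau> + T)) - V (x \<tau>) \<le> - \<delta>1 * norm (x \<tau>)"
    and A4_bounded: "\<exists>\<alpha>0>0. \<exists>B_u. \<forall>\<alpha>. 0 < \<alpha> \<and> \<alpha> \<le> \<alpha>0 \<longrightarrow>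
                      (\<forall>z\<in>clock_orbit w ph. \<forall>\<Theta>.
                         nonauto_solution (\<lambda>t \<theta>. \<alpha> *\<^sub>R f \<theta> (probe G0 (clock_flow w z t))) \<Theta>
                         \<longrightarrow> (\<forall>\<^sub>F t in at_top. norm (\<Theta> t) \<le> B_u))"
    and A4_equil: "fbar \<theta>s = 0" "\<forall>\<theta>. fbar \<theta> = 0 \<longrightarrow> \<theta> = \<theta>s"
    and A4_GAS: "globally_asymptotically_stable fbar \<theta>s"
    and A4_hurwitz: "hurwitz (Abar \<theta>s)"
  shows "\<exists>b>0. \<exists>\<delta>>0. \<forall>x. ode_solution fbar x \<longrightarrow>
           (\<forall>t\<ge>0. norm (x t - \<theta>s) \<le> b * norm (x 0 - \<theta>s) * exp (- \<delta> * t))"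
proof -
  define L where "L = \<bar>L_f\<bar>"
  have L: "L \<ge> 0" by (simp add: L_def)
  have lip: "\<forall>a b. norm (fbar a - fbar b) \<le> L * norm (a - b)"
  proof (intro allI)
    fix a b
    have "norm (fbar a - fbar b) \<le> L_f * norm (a - b)" using A1_fbar by blast
    also have "\<dots> \<le> L * norm (a - b)" by (simp add: L_def mult_right_mono)
    finally show "norm (fbar a - fbar b) \<le> L * norm (a - b)" .
  qed
  have stab: "\<forall>e>0. \<exists>d>0. \<forall>x. ode_solution fbar x \<and> norm (x 0 - \<theta>s) < d \<longrightarrow> (\<forall>t\<ge>0. norm (x t - \<theta>s) < e)"
    and att: "\<forall>x. ode_solution fbar x \<longrightarrow> (x \<longlongrightarrow> \<theta>s) at_top"
    using A4_GAS unfolding globally_asymptotically_stable_def by auto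
  obtain S :: "real^'d \<Rightarrow> complex^'d" and c where S: "linear S" "\<forall>v. S v = 0 \<longrightarrow> v = 0"
    and c: "c > 0" "\<forall>v. inner (S v) (S (Abar \<theta>s *v v)) \<le> - c * (norm (S v))^2"
    using hurwitz_lyap[OF A4_hurwitz] by blast
  obtain r C \<delta>l where r: "r > 0" "\<delta>l > 0"
    and loc: "\<And>x t. ode_solution fbar x \<Longrightarrow> norm (x 0 - \<theta>s) < r \<Longrightarrow> t \<ge> 0 \<Longrightarrow>
                norm (x t - \<theta>s) \<le> C * norm (x 0 - \<theta>s) * exp (- \<delta>l * t)"
    using local_exp[OF fbar_deriv[rule_format, of \<theta>s] A4_equil(1) S c stab] by blast
  obtain R3 C3 \<gamma> where R3: "R3 \<ge> 0" "C3 \<ge> 0" "\<gamma> > 0"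
    and glob: "\<And>x t. ode_solution fbar x \<Longrightarrow> t \<ge> 0 \<Longrightarrow> norm (x t - \<theta>s) \<le> R3 + C3 * norm (x 0 - \<theta>s) * exp (- \<gamma> * t)"
    using v4_bound[OF lip L A4_equil(1) V4_nonneg V4_lip V4_pos V4_coercive V4_drift] by blast
  define R3' where "R3' = R3 + 1"
  have R3': "R3' > 0" using R3 by (simp add: R3'_def)
  obtain TR where TR: "\<And>x. ode_solution fbar x \<Longrightarrow> norm (x 0 - \<theta>s) \<le> R3 + R3' \<Longrightarrow> \<exists>s\<in>{0..TR}. norm (x s - \<theta>s) < r"
    using uniform_hit[OF lip L att r(1), of "R3 + R3'"] by blast
  have TR0: "TR \<ge> 0"
  proof -
    have "ode_solution fbar (\<lambda>t. \<theta>s)" by (rule const_solution[of fbar \<theta>s, OF A4_equil(1)])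
    from TR[OF this] R3' R3 show ?thesis by auto
  qed
  define \<delta> where "\<delta> = min \<delta>l \<gamma>"
  have \<delta>: "\<delta> > 0" "\<delta> \<le> \<delta>l" "\<delta> \<le> \<gamma>" using r R3 by (auto simp: \<delta>_def)
  define C' where "C' = max C 1"
  have C': "C' \<ge> 1" by (simp add: C'_def)
  define b where "b = (C' * r + R3) * exp (\<delta> * TR) * (1 / r + C3 / R3') + C3 + C'"
  have b: "b > 0" unfolding b_def using C' r R3 R3' by (intro add_nonneg_pos) (auto intro!: add_nonneg_nonneg mult_nonneg_nonneg)
  have loc': "norm (x t - \<theta>s) \<le> C' * norm (x 0 - \<theta>s) * exp (- \<delta> * t)"
    if x: "ode_solution fbar x" and x0: "norm (x 0 - \<theta>s) < r" and t: "t \<ge> 0" for x t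
  proof -
    have "norm (x t - \<theta>s) \<le> C * norm (x 0 - \<theta>s) * exp (- \<delta>l * t)" by (rule loc[OF x x0 t])
    also have "\<dots> \<le> C' * norm (x 0 - \<theta>s) * exp (- \<delta> * t)"
      using \<delta> t by (intro mult_mono) (auto simp: C'_def intro: mult_right_mono)
    finally show ?thesis .
  qed
  have "\<forall>x. ode_solution fbar x \<longrightarrow> (\<forall>t\<ge>0. norm (x t - \<theta>s) \<le> b * norm (x 0 - \<theta>s) * exp (- \<delta> * t))"
  proof (intro allI impI)
    fix x t assume x: "ode_solution fbar x" and t: "(t::real) \<ge> 0"
    define n0 where "n0 = norm (x 0 - \<theta>s)"
    show "norm (x t - \<theta>s) \<le> b * norm (x 0 - \<theta>s) * exp (- \<delta> * t)"
    proof (cases "n0 < r")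
      case True
      have "norm (x t - \<theta>s) \<le> C' * n0 * exp (- \<delta> * t)" using loc'[OF x _ t] True by (simp add: n0_def)
      also have "\<dots> \<le> b * n0 * exp (- \<delta> * t)"
        using C' R3 r R3' by (intro mult_right_mono) (auto simp: b_def n0_def intro!: add_nonneg_nonneg mult_nonneg_nonneg)
      finally show ?thesis by (simp add: n0_def)
    next
      case False
      then have n0r: "n0 \<ge> r" by simp
      define M where "M = max 1 (C3 * n0 / R3')"
      have M1: "M \<ge> 1" by (simp add: M_def)
      have "C3 * n0 / R3' \<le> M" by (simp add: M_def)
      then have "C3 * n0 \<le> M * R3'" using R3' by (simp add: divide_le_eq)
      note M = M1 this
      define t1 where "t1 = ln M / \<gamma>"
      have t1: "t1 \<ge> 0" "exp (\<gamma> * t1) = M" using M R3 by (auto simp: t1_def)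
      have "norm (x t1 - \<theta>s) \<le> R3 + C3 * n0 * exp (- \<gamma> * t1)" using glob[OF x t1(1)] by (simp add: n0_def)
      also have "C3 * n0 * exp (- \<gamma> * t1) = C3 * n0 / M" using t1 by (simp add: exp_minus field_simps)
      also have "\<dots> \<le> R3'" using M by (simp add: divide_le_eq mult.commute)
      finally have xt1: "norm (x t1 - \<theta>s) \<le> R3 + R3'" by simp
      obtain s where s: "s \<in> {0..TR}" "norm (x (s + t1) - \<theta>s) < r"
        using TR[OF sol_shift[OF x t1(1)]] xt1 by auto
      define \<sigma> where "\<sigma> = s + t1"
      have \<sigma>: "\<sigma> \<ge> 0" "\<sigma> \<le> TR + t1" "norm (x \<sigma> - \<theta>s) < r" using s t1 by (auto simp: \<sigma>_def)
      have e\<sigma>: "exp (\<delta> * \<sigma>) \<le> exp (\<delta> * TR) * M"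
      proof -
        have "exp (\<delta> * \<sigma>) \<le> exp (\<delta> * TR + \<delta> * t1)"
          using \<sigma> \<delta> by (simp add: distrib_left[symmetric] mult_left_mono)
        also have "\<dots> = exp (\<delta> * TR) * exp (\<delta> * t1)" by (simp add: exp_add)
        also have "exp (\<delta> * t1) \<le> exp (\<gamma> * t1)"
        proof -
          have "\<delta> * t1 \<le> \<gamma> * t1" using \<delta> t1(1) by (intro mult_right_mono) auto
          then show ?thesis by simp
        qed
        finally show ?thesis using t1 by (simp add: mult_left_mono)
      qed
      have bound: "norm (x t - \<theta>s) \<le> (C' * r + R3) * exp (\<delta> * \<sigma>) * exp (- \<delta> * t) + C3 * n0 * exp (- \<delta> * t)"
      proof (cases "t \<ge> \<sigma>")
        case True
        have "norm (x t - \<theta>s) = norm (x ((t - \<sigma>) + \<sigma>) - \<theta>s)" by simp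
        also have "\<dots> \<le> C' * norm (x (0 + \<sigma>) - \<theta>s) * exp (- \<delta> * (t - \<sigma>))"
          using loc'[OF sol_shift[OF x \<sigma>(1)], of "t - \<sigma>"] \<sigma> True by simp
        also have "\<dots> \<le> C' * r * exp (- \<delta> * (t - \<sigma>))"
          using \<sigma> C' by (intro mult_right_mono) auto
        also have "\<dots> = C' * r * exp (\<delta> * \<sigma>) * exp (- \<delta> * t)"
          by (simp add: exp_add[symmetric] algebra_simps)
        also have "\<dots> \<le> (C' * r + R3) * exp (\<delta> * \<sigma>) * exp (- \<delta> * t)"
          using R3 by (intro mult_right_mono) auto
        finally show ?thesis using R3 n0r r by (smt (verit) exp_gt_zero mult_nonneg_nonneg)
      next
        case False
        have "norm (x t - \<theta>s) \<le> R3 + C3 * n0 * exp (- \<gamma> * t)" using glob[OF x t] by (simp add: n0_def)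
        also have "\<dots> \<le> R3 * exp (\<delta> * \<sigma>) * exp (- \<delta> * t) + C3 * n0 * exp (- \<delta> * t)"
        proof (rule add_mono)
          have "1 \<le> exp (\<delta> * \<sigma> - \<delta> * t)" using False \<delta> by (simp add: mult_left_mono)
          also have "\<dots> = exp (\<delta> * \<sigma>) * exp (- \<delta> * t)" by (simp add: exp_diff exp_minus field_simps)
          finally show "R3 \<le> R3 * exp (\<delta> * \<sigma>) * exp (- \<delta> * t)"
            using R3 by (metis mult.assoc mult_left_mono mult.right_neutral)
          show "C3 * n0 * exp (- \<gamma> * t) \<le> C3 * n0 * exp (- \<delta> * t)"
            using R3 \<delta> t r n0r by (intro mult_left_mono) (auto intro: mult_right_mono)
        qed
        also have "\<dots> \<le> (C' * r + R3) * exp (\<delta> * \<sigma>) * exp (- \<delta> * t) + C3 * n0 * exp (- \<delta> * t)"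
          using C' r by (intro add_right_mono mult_right_mono) auto
        finally show ?thesis .
      qed
      also have "\<dots> \<le> (C' * r + R3) * (exp (\<delta> * TR) * M) * exp (- \<delta> * t) + C3 * n0 * exp (- \<delta> * t)"
        using e\<sigma> C' r R3 by (intro add_right_mono mult_right_mono mult_left_mono) auto
      also have "\<dots> \<le> b * n0 * exp (- \<delta> * t)"
      proof -
        have Mn: "M \<le> n0 * (1 / r + C3 / R3')"
        proof -
          have a: "1 \<le> n0 / r" using n0r r by simp
          have b: "0 \<le> n0 * (C3 / R3')" using n0r r R3 R3' by simp
          have e1: "C3 * n0 / R3' = n0 * (C3 / R3')" by simp
          have e2: "n0 * (1 / r + C3 / R3') = n0 / r + n0 * (C3 / R3')" by (simp add: algebra_simps)
          show ?thesis unfolding M_def e1 e2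
            by (rule max.boundedI) (use a b in linarith)+
        qed
        define P where "P = (C' * r + R3) * exp (\<delta> * TR) * (1 / r + C3 / R3')"
        have "(C' * r + R3) * (exp (\<delta> * TR) * M) \<le> (C' * r + R3) * (exp (\<delta> * TR) * (n0 * (1 / r + C3 / R3')))"
          using C' r R3 Mn by (intro mult_left_mono) auto
        also have "\<dots> = P * n0" by (simp add: P_def mult.commute mult.left_commute mult.assoc)
        finally have h1: "(C' * r + R3) * (exp (\<delta> * TR) * M) \<le> P * n0" .
        have h2: "b * n0 = P * n0 + C3 * n0 + C' * n0" by (simp add: b_def P_def distrib_right)
        have h3: "C' * n0 \<ge> 0" using C' n0r r by simp
        have "(C' * r + R3) * (exp (\<delta> * TR) * M) + C3 * n0 \<le> b * n0"
          using h1 h2 h3 by linarith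
        then have "((C' * r + R3) * (exp (\<delta> * TR) * M) + C3 * n0) * exp (- \<delta> * t) \<le> b * n0 * exp (- \<delta> * t)"
          by (intro mult_right_mono) auto
        then show ?thesis by (simp add: distrib_right)
      qed
      finally show ?thesis by (simp add: n0_def)
    qed
  qed
  then show ?thesis using b \<delta> by blast
qed

end
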